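(* Let $\mathcal M$ be a special local Moufang set with basis $(0,\infty)$ such that $U_\infty$ is abelian, and let $n\ge1$. If for every unit $x$ and every $1\le k\le n$ the point $x\cdot k$ is a unit, then $U_\infty$ is uniquely $k$-divisible for every $1\le k\le n$, i.e. every $u\in U_\infty$ has a unique $v\in U_\infty$ with $v^k=u$.
   Context: Group actions are right actions; $g^h=h^{-1}gh$. For $(X,\sim)$, $\overline x$ is the class of $x$, $\overline X$ the set of classes, $\mathrm{Sym}(X,\sim)$ the bijections $g$ with $x\sim y\iff xg\sim yg$, $\overline U$ the induced group on $\overline X$. A local Moufang set is $(X,\sim)$ with $|\overline X|>2$ and subgroups $U_x\le\mathrm{Sym}(X,\sim)$ ($x\in X$) with: (LM0) $x\sim y\Rightarrow\overline{U_x}=\overline{U_y}$; (LM1) $U_x$ fixes $x$ and is sharply transitive on $X\setminus\overline x$; (LM1') $\overline{U_x}$ fixes $\overline x$ and is sharply transitive on $\overline X\setminus\{\overline x\}$; (LM2) $U_x^g=U_{xg}$ for all $x$ and all $g\in\langle U_y\rangle$. Fix a basis $(0,\infty)$, $0\not\sim\infty$. For $x\not\sim\infty$: $\alpha_x$ is the unique element of $U_\infty$ with $0\alpha_x=x$, $-x:=0\alpha_x^{-1}$, and $x\cdot k:=0\alpha_x^k$. A unit is $x$ with $x\not\sim0,\infty$; $\mu_x$ is the unique element of $U_0\alpha_xU_0$ interchanging $0$ and $\infty$. $\mathcal M$ is special if $\big(-(x\tau^{-1})\big)\tau=-x$ for all units $x$, where $\tau=\mu_e$ for some (equivalently any) unit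 $e$. *)

theory Defs
  imports "HOL-Library.FuncSet"
begin

text \<open>The point set X is the universe of the type 'a; the equivalence
  relation is eq. Permutations are functions 'a => 'a; the right action x g is
  written g x, so the group product g h (first g, then h) is h o g, the inverse
  is inv g, and the conjugate h^g = g^-1 h g is g o h o inv g.\<close>

definition sym_eq :: "('a \<Rightarrow> 'a \<Rightarrow> bool) \<Rightarrow> ('a \<Rightarrow> 'a) set" where
  "sym_eq eq = {g. bij g \<and> (\<forall>x y. eq x y \<longleftrightarrow> eq (g x) (g y))}"

definition is_subgroup_perm :: "('a \<Rightarrow> 'a) set \<Rightarrow> ('a \<Rightarrow> 'a) set \<Rightarrow> bool" where
  "is_subgroup_perm H G \<longleftrightarrow> H \<subseteq> G \<and> id \<in> H \<and>
     (\<forall>g\<in>H. \<forall>h\<in>H. h \<circ> g \<in> H) \<and> (\<forall>g\<in>H. inv g \<in> H)"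

definition cls :: "('a \<Rightarrow> 'a \<Rightarrow> bool) \<Rightarrow> 'a \<Rightarrow> 'a set" where
  "cls eq x = {y. eq x y}"

definition classes :: "('a \<Rightarrow> 'a \<Rightarrow> bool) \<Rightarrow> 'a set set" where
  "classes eq = range (cls eq)"

definition bar :: "('a \<Rightarrow> 'a \<Rightarrow> bool) \<Rightarrow> ('a \<Rightarrow> 'a) \<Rightarrow> ('a set \<Rightarrow> 'a set)" where
  "bar eq g = restrict (\<lambda>C. g ` C) (classes eq)"

definition bar_group :: "('a \<Rightarrow> 'a \<Rightarrow> bool) \<Rightarrow> ('a \<Rightarrow> 'a) set \<Rightarrow> ('a set \<Rightarrow> 'a set) set" where
  "bar_group eq H = bar eq ` H"

inductive_set gen_group :: "('a \<Rightarrow> ('a \<Rightarrow> 'a) set) \<Rightarrow> ('a \<Rightarrow> 'a) set"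
  for U :: "'a \<Rightarrow> ('a \<Rightarrow> 'a) set" where
  gen_id: "id \<in> gen_group U"
| gen_base: "g \<in> U y \<Longrightarrow> g \<in> gen_group U"
| gen_mult: "g \<in> gen_group U \<Longrightarrow> h \<in> gen_group U \<Longrightarrow> h \<circ> g \<in> gen_group U"
| gen_inv: "g \<in> gen_group U \<Longrightarrow> inv g \<in> gen_group U"

definition local_moufang_set :: "('a \<Rightarrow> 'a \<Rightarrow> bool) \<Rightarrow> ('a \<Rightarrow> ('a \<Rightarrow> 'a) set) \<Rightarrow> bool" where
  "local_moufang_set eq U \<longleftrightarrow>
     equivp eq \<and>
     (\<exists>a b c. \<not> eq a b \<and> \<not> eq a c \<and> \<not> eq b c) \<and>
     (\<forall>x. is_subgroup_perm (U x) (sym_eq eq)) \<and>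
     \<comment> \<open>LM0\<close>
     (\<forall>x y. eq x y \<longrightarrow> bar_group eq (U x) = bar_group eq (U y)) \<and>
     \<comment> \<open>LM1\<close>
     (\<forall>x. (\<forall>g\<in>U x. g x = x) \<and>
          (\<forall>y z. \<not> eq x y \<longrightarrow> \<not> eq x z \<longrightarrow> (\<exists>!g. g \<in> U x \<and> g y = z))) \<and>
     \<comment> \<open>LM1'\<close>
     (\<forall>x. (\<forall>f\<in>bar_group eq (U x). f (cls eq x) = cls eq x) \<and>
          (\<forall>C\<in>classes eq - {cls eq x}. \<forall>D\<in>classes eq - {cls eq x}.
              \<exists>!f. f \<in> bar_group eq (U x) \<and> f C = D)) \<and>
     \<comment> \<open>LM2\<close>
     (\<forall>x. \<forall>g\<in>gen_group U. (\<lambda>h. g \<circ> h \<circ> inv g) ` U x = U (g x))"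

definition alpha :: "('a \<Rightarrow> ('a \<Rightarrow> 'a) set) \<Rightarrow> 'a \<Rightarrow> 'a \<Rightarrow> 'a \<Rightarrow> ('a \<Rightarrow> 'a)" where
  "alpha U zero infty x = (THE g. g \<in> U infty \<and> g zero = x)"

definition lneg :: "('a \<Rightarrow> ('a \<Rightarrow> 'a) set) \<Rightarrow> 'a \<Rightarrow> 'a \<Rightarrow> 'a \<Rightarrow> 'a" where
  "lneg U zero infty x = inv (alpha U zero infty x) zero"

definition lmult :: "('a \<Rightarrow> ('a \<Rightarrow> 'a) set) \<Rightarrow> 'a \<Rightarrow> 'a \<Rightarrow> 'a \<Rightarrow> nat \<Rightarrow> 'a" where
  "lmult U zero infty x k = (alpha U zero infty x ^^ k) zero"

definition is_unit :: "('a \<Rightarrow> 'a \<Rightarrow> bool) \<Rightarrow> 'a \<Rightarrow> 'a \<Rightarrow> 'a \<Rightarrow> bool" where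
  "is_unit eq zero infty x \<longleftrightarrow> \<not> eq x zero \<and> \<not> eq x infty"

text \<open>mu x: the unique element of U_0 alpha_x U_0 swapping zero and infty
  (a alpha b in right-action notation is the function b o alpha o a).\<close>
definition mu :: "('a \<Rightarrow> ('a \<Rightarrow> 'a) set) \<Rightarrow> 'a \<Rightarrow> 'a \<Rightarrow> 'a \<Rightarrow> ('a \<Rightarrow> 'a)" where
  "mu U zero infty x = (THE m. (\<exists>a\<in>U zero. \<exists>b\<in>U zero. m = b \<circ> alpha U zero infty x \<circ> a)
                              \<and> m zero = infty \<and> m infty = zero)"

definition special :: "('a \<Rightarrow> 'a \<Rightarrow> bool) \<Rightarrow> ('a \<Rightarrow> ('a \<Rightarrow> 'a) set) \<Rightarrow> 'a \<Rightarrow> 'a \<Rightarrow> bool" where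
  "special eq U zero infty \<longleftrightarrow>
     (\<exists>e. is_unit eq zero infty e \<and>
        (let \<tau> = mu U zero infty e in
          \<forall>x. is_unit eq zero infty x \<longrightarrow>
            \<tau> (lneg U zero infty (inv \<tau> x)) = lneg U zero infty x))"

end

theory Submission
  imports Defs
begin

lemma sym_eq_bij: "g \<in> sym_eq eq \<Longrightarrow> bij g" by (simp add: sym_eq_def)
lemma sym_eq_eq: "g \<in> sym_eq eq \<Longrightarrow> eq (g a) (g b) \<longleftrightarrow> eq a b" by (simp add: sym_eq_def)

lemma sym_eq_comp: "g \<in> sym_eq eq \<Longrightarrow> h \<in> sym_eq eq \<Longrightarrow> h \<circ> g \<in> sym_eq eq"
  by (auto simp: sym_eq_def bij_comp)

lemma sym_eq_inv: assumes "g \<in> sym_eq eq" shows "inv g \<in> sym_eq eq"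
proof -
  have b: "bij g" using assms by (simp add: sym_eq_def)
  have "eq (inv g x) (inv g y) \<longleftrightarrow> eq x y" for x y
    using sym_eq_eq[OF assms, of "inv g x" "inv g y"] b by (simp add: bij_is_surj surj_f_inv_f)
  then show ?thesis using b by (simp add: sym_eq_def bij_imp_bij_inv)
qed

lemma pow_comm_gen: "f \<circ> g = g \<circ> f \<Longrightarrow> g \<circ> f ^^ k = f ^^ k \<circ> g"
  by (induction k) (simp_all add: comp_assoc[symmetric], metis comp_assoc)

lemma pow_comm: assumes "f \<circ> g = g \<circ> f" shows "(f \<circ> g) ^^ k = f ^^ k \<circ> g ^^ k"
proof (induction k)
  case 0 then show ?case by simp
next
  case (Suc k)
  have c: "g ((f ^^ k) y) = (f ^^ k) (g y)" for y
    using fun_cong[OF pow_comm_gen[OF assms, of k], of y] by simp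
  show ?case
  proof
    fix x
    have "((f \<circ> g) ^^ Suc k) x = f (g ((f ^^ k) ((g ^^ k) x)))" by (simp only: funpow.simps(2) comp_apply Suc.IH)
    also have "\<dots> = f ((f ^^ k) (g ((g ^^ k) x)))" using c by simp
    also have "\<dots> = (f ^^ Suc k \<circ> g ^^ Suc k) x" by (simp add: funpow_swap1)
    finally show "((f \<circ> g) ^^ Suc k) x = (f ^^ Suc k \<circ> g ^^ Suc k) x" .
  qed
qed

lemma conj_pow: assumes "bij f" shows "(f \<circ> g \<circ> inv f) ^^ k = f \<circ> g ^^ k \<circ> inv f"
proof (induction k)
  case 0 then show ?case using assms by (auto simp: bij_is_surj surj_f_inv_f)
next
  case (Suc k)
  show ?case
  proof
    fix x
    have "((f \<circ> g \<circ> inv f) ^^ Suc k) x = f (g (inv f (f ((g ^^ k) (inv f x)))))" by (simp only: funpow.simps(2) comp_apply Suc.IH)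
    also have "\<dots> = f (g ((g ^^ k) (inv f x)))" using assms by (simp add: bij_is_inj inv_f_f)
    also have "\<dots> = (f \<circ> g ^^ Suc k \<circ> inv f) x" by simp
    finally show "((f \<circ> g \<circ> inv f) ^^ Suc k) x = (f \<circ> g ^^ Suc k \<circ> inv f) x" .
  qed
qed

lemma ex1_uniq: "\<exists>!x. P x \<Longrightarrow> P a \<Longrightarrow> P b \<Longrightarrow> a = b" by blast

locale slm =
  fixes eq :: "'a \<Rightarrow> 'a \<Rightarrow> bool" and U :: "'a \<Rightarrow> ('a \<Rightarrow> 'a) set" and zero infty :: 'a
  assumes lm: "local_moufang_set eq U" and zi: "\<not> eq zero infty"
begin

abbreviation "al \<equiv> alpha U zero infty"
abbreviation "ng \<equiv> lneg U zero infty"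
abbreviation "mul \<equiv> lmult U zero infty"
abbreviation "unit \<equiv> is_unit eq zero infty"

lemma LMall1: "equivp eq"
  using lm unfolding local_moufang_set_def by (elim conjE) assumption
lemma LMall2: "\<forall>x. is_subgroup_perm (U x) (sym_eq eq)"
  using lm unfolding local_moufang_set_def by (elim conjE) assumption
lemma LMall3: "\<forall>x. (\<forall>g\<in>U x. g x = x) \<and>
          (\<forall>y z. \<not> eq x y \<longrightarrow> \<not> eq x z \<longrightarrow> (\<exists>!g. g \<in> U x \<and> g y = z))"
  using lm unfolding local_moufang_set_def by (elim conjE) assumption
lemma LMall4: "\<forall>x. \<forall>g\<in>gen_group U. (\<lambda>h. g \<circ> h \<circ> inv g) ` U x = U (g x)"
  using lm unfolding local_moufang_set_def by (elim conjE) assumption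
lemmas LMall = LMall1 LMall2 LMall3 LMall4

lemma equiv: "equivp eq" by (rule LMall(1))
lemma eq_refl: "eq x x" by (rule equivp_reflp[OF equiv])
lemma eq_sym: "eq x y \<Longrightarrow> eq y x" by (rule equivp_symp[OF equiv])
lemma eq_trans: "eq x y \<Longrightarrow> eq y z \<Longrightarrow> eq x z" by (rule equivp_transp[OF equiv])

lemma subg: "is_subgroup_perm (U x) (sym_eq eq)" using LMall(2) by (rule spec)
lemma U_sym: "g \<in> U x \<Longrightarrow> g \<in> sym_eq eq" using subg unfolding is_subgroup_perm_def by blast
lemma U_bij: "g \<in> U x \<Longrightarrow> bij g" by (rule sym_eq_bij[OF U_sym])
lemma U_eq: "g \<in> U x \<Longrightarrow> eq (g a) (g b) \<longleftrightarrow> eq a b" by (rule sym_eq_eq[OF U_sym])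
lemma U_id: "id \<in> U x" using subg unfolding is_subgroup_perm_def by blast
lemma U_comp: "g \<in> U x \<Longrightarrow> h \<in> U x \<Longrightarrow> h \<circ> g \<in> U x" using subg unfolding is_subgroup_perm_def by blast
lemma U_inv: "g \<in> U x \<Longrightarrow> inv g \<in> U x" using subg unfolding is_subgroup_perm_def by blast
lemma U_fix: "g \<in> U x \<Longrightarrow> g x = x" using conjunct1[OF spec[OF LMall(3), of x]] by blast
lemma U_sharp: "\<not> eq x y \<Longrightarrow> \<not> eq x z \<Longrightarrow> \<exists>!g. g \<in> U x \<and> g y = z"
  using conjunct2[OF spec[OF LMall(3), of x]] by blast
lemma LM2: assumes "g \<in> gen_group U" "h \<in> U x" shows "g \<circ> h \<circ> inv g \<in> U (g x)"
proof -
  have "(\<lambda>h. g \<circ> h \<circ> inv g) ` U x = U (g x)" using LMall(4) assms(1) by blast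
  then show ?thesis using assms(2) by blast
qed

lemma U_uniq: assumes "\<not> eq x y" "g \<in> U x" "h \<in> U x" "g y = h y" shows "g = h"
proof -
  have "eq x (g y) \<longleftrightarrow> eq (g x) (g y)" using U_fix[OF assms(2)] by simp
  then have "\<not> eq x (g y)" using U_eq[OF assms(2)] assms(1) by simp
  then have ex: "\<exists>!f. f \<in> U x \<and> f y = g y" by (rule U_sharp[OF assms(1)])
  have "g \<in> U x \<and> g y = g y" "h \<in> U x \<and> h y = g y" using assms by auto
  then show ?thesis using ex1_uniq[OF ex] by blast
qed

lemma gen_sym: "g \<in> gen_group U \<Longrightarrow> g \<in> sym_eq eq"
proof (induction rule: gen_group.induct)
  case gen_id then show ?case using bij_id by (simp add: sym_eq_def id_def)
next
  case (gen_base g y) then show ?case by (rule U_sym)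
next
  case (gen_mult g h) then show ?case using sym_eq_comp by blast
next
  case (gen_inv g) then show ?case using sym_eq_inv by blast
qed

lemma pow_U: "g \<in> U x \<Longrightarrow> g ^^ k \<in> U x"
  by (induction k) (simp_all add: U_id U_comp)

lemma iz: "\<not> eq infty zero" using zi eq_sym by blast

lemma al: assumes "\<not> eq a infty" shows "al a \<in> U infty" "al a zero = a"
proof -
  have "\<exists>!g. g \<in> U infty \<and> g zero = a" using U_sharp iz assms eq_sym by blast
  then have "al a \<in> U infty \<and> al a zero = a" unfolding alpha_def by (rule theI')
  then show "al a \<in> U infty" "al a zero = a" by auto
qed

lemma Uinf_ne: assumes a: "g \<in> U infty" "\<not> eq a infty" shows "\<not> eq (g a) infty"
proof -
  have "eq (g a) infty \<longleftrightarrow> eq (g a) (g infty)" using U_fix[OF a(1)] by simp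
  then show ?thesis using U_eq[OF a(1)] a(2) by simp
qed

lemma al_of: assumes "g \<in> U infty" shows "g = al (g zero)"
proof -
  have ne: "\<not> eq (g zero) infty" using Uinf_ne assms zi by blast
  show ?thesis using U_uniq[OF iz assms al(1)[OF ne]] al(2)[OF ne] by simp
qed

lemma al_inv: assumes "\<not> eq a infty" shows "inv (al a) = al (ng a)"
  unfolding lneg_def by (rule al_of[OF U_inv[OF al(1)[OF assms]]])

lemma ng_ne: assumes "\<not> eq a infty" shows "\<not> eq (ng a) infty"
  unfolding lneg_def using Uinf_ne[OF U_inv[OF al(1)[OF assms]] zi] .

lemma al_ng: assumes "\<not> eq a infty" shows "al a (ng a) = zero"
  unfolding lneg_def using U_bij[OF al(1)[OF assms]] by (simp add: bij_is_surj surj_f_inv_f)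

lemma ng_ng: assumes "\<not> eq a infty" shows "ng (ng a) = a"
proof -
  have "ng (ng a) = inv (al (ng a)) zero" by (rule lneg_def)
  also have "\<dots> = inv (inv (al a)) zero" using al_inv[OF assms] by simp
  also have "\<dots> = al a zero" using U_bij[OF al(1)[OF assms]] by (simp add: inv_inv_eq)
  finally show ?thesis using al(2)[OF assms] by simp
qed

lemma ng_unit: assumes "unit a" shows "unit (ng a)"
proof -
  have a: "\<not> eq a infty" "\<not> eq a zero" using assms by (auto simp: is_unit_def)
  have g: "inv (al a) \<in> U infty" using U_inv al a by blast
  have "inv (al a) (al a zero) = zero" using U_bij[OF al(1)[OF a(1)]] by (simp add: bij_is_inj inv_f_f)
  then have "inv (al a) a = zero" using al(2)[OF a(1)] by simp
  then have "eq (ng a) zero \<longleftrightarrow> eq zero a" unfolding lneg_def using U_eq[OF g, of zero a] by simp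
  then show ?thesis using ng_ne a eq_sym by (auto simp: is_unit_def)
qed

lemma al_pow: assumes "\<not> eq a infty" shows "al a ^^ k = al (mul a k)"
  using al_of[OF pow_U[OF al(1)[OF assms]]] unfolding lmult_def by simp

lemma mul_ne: assumes "\<not> eq a infty" shows "\<not> eq (mul a k) infty"
  unfolding lmult_def using Uinf_ne[OF pow_U[OF al(1)[OF assms]] zi] .

lemma al_zero: "\<not> eq a infty \<Longrightarrow> al a zero = a" using al by blast

lemma mul_1: assumes "\<not> eq a infty" shows "mul a 1 = a"
  unfolding lmult_def using al(2)[OF assms] by simp

lemma mul_mul: assumes "\<not> eq a infty" shows "mul (mul a j) k = mul a (j * k)"
proof -
  have 1: "al (mul a j) ^^ k = al a ^^ (j * k)" by (simp only: al_pow[OF assms, symmetric] funpow_mult)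
  have "mul (mul a j) k = (al (mul a j) ^^ k) zero" by (rule lmult_def)
  also have "\<dots> = (al a ^^ (j * k)) zero" using 1 by simp
  also have "\<dots> = mul a (j * k)" by (rule lmult_def[symmetric])
  finally show ?thesis .
qed

lemma mul_Suc: "mul a (Suc m) = al a (mul a m)" unfolding lmult_def by simp

lemma al_mul_apply: assumes "\<not> eq a infty" shows "al (mul a m) a = mul a (Suc m)"
proof -
  have "al (mul a m) a = (al a ^^ m) (al a zero)" using al_pow[OF assms] al(2)[OF assms] by simp
  also have "\<dots> = mul a (Suc m)" unfolding lmult_def by (simp add: funpow_Suc_right del: funpow.simps)
  finally show ?thesis .
qed

end

context slm begin

lemma mu_props: assumes "unit x"
  shows "mu U zero infty x \<in> gen_group U" "mu U zero infty x zero = infty" "mu U zero infty x infty = zero"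
proof -
  let ?P = "\<lambda>m. (\<exists>a\<in>U zero. \<exists>b\<in>U zero. m = b \<circ> al x \<circ> a) \<and> m zero = infty \<and> m infty = zero"
  have x: "\<not> eq x infty" "\<not> eq x zero" using assms by (auto simp: is_unit_def)
  have nx: "\<not> eq (ng x) zero" using ng_unit[OF assms] by (auto simp: is_unit_def)
  have "\<exists>!g. g \<in> U zero \<and> g infty = ng x" using U_sharp[OF zi] nx eq_sym by blast
  then obtain a where a: "a \<in> U zero" "a infty = ng x" by blast
  have "\<exists>!g. g \<in> U zero \<and> g x = infty" using U_sharp[OF _ zi, of x] x eq_sym by blast
  then obtain b where b: "b \<in> U zero" "b x = infty" by blast
  have a0: "a zero = zero" and b0: "b zero = zero" using U_fix a b by auto
  have Pm: "?P (b \<circ> al x \<circ> a)"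
  proof -
    have "(b \<circ> al x \<circ> a) zero = infty" using a0 al(2)[OF x(1)] b by simp
    moreover have "(b \<circ> al x \<circ> a) infty = zero" using a al_ng[OF x(1)] b0 by simp
    ultimately show ?thesis using a b by blast
  qed
  have uniq: "m = b \<circ> al x \<circ> a" if "?P m" for m
  proof -
    from that obtain a' b' where ab': "a' \<in> U zero" "b' \<in> U zero" "m = b' \<circ> al x \<circ> a'"
      and m: "m zero = infty" "m infty = zero" by blast
    have ib': "inj b'" using U_bij[OF ab'(2)] bij_is_inj by blast
    have "b' (al x (a' infty)) = b' zero" using m ab' U_fix[OF ab'(2)] by simp
    then have "al x (a' infty) = zero" using ib' by (simp add: inj_eq)
    moreover have "al x (a infty) = zero" using a al_ng[OF x(1)] by simp
    ultimately have "al x (a' infty) = al x (a infty)" by simp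
    then have "a' infty = a infty" using U_bij[OF al(1)[OF x(1)]] by (simp add: bij_is_inj inj_eq)
    then have aa: "a' = a" using U_uniq[OF zi ab'(1) a(1)] by simp
    have "b' x = infty" using m ab' U_fix[OF ab'(1)] al(2)[OF x(1)] by simp
    then have "b' = b" using U_uniq[of zero x b' b] x ab'(2) b eq_sym by auto
    then show ?thesis using aa ab' by simp
  qed
  have P: "?P (mu U zero infty x)" unfolding mu_def using Pm uniq by (rule theI)
  then show "mu U zero infty x zero = infty" "mu U zero infty x infty = zero" by auto
  from P obtain a' b' where ab': "a' \<in> U zero" "b' \<in> U zero" "mu U zero infty x = b' \<circ> al x \<circ> a'" by blast
  have "b' \<circ> al x \<circ> a' \<in> gen_group U"
    by (intro gen_mult; rule gen_base[where U=U], (rule ab'(1) ab'(2) al(1)[OF x(1)]))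
  then show "mu U zero infty x \<in> gen_group U" using ab' by simp
qed

end

locale slm2 = slm +
  fixes \<tau> :: "'a \<Rightarrow> 'a" and e :: 'a and n :: nat
  assumes ab: "\<forall>g\<in>U infty. \<forall>h\<in>U infty. g \<circ> h = h \<circ> g"
    and e_unit: "unit e" and tau_def: "\<tau> = mu U zero infty e"
    and spec: "\<forall>x. unit x \<longrightarrow> \<tau> (ng (inv \<tau> x)) = ng x"
    and hyp: "\<forall>x. unit x \<longrightarrow> (\<forall>k. 1 \<le> k \<and> k \<le> n \<longrightarrow> unit (mul x k))"
begin

lemma tau_gen: "\<tau> \<in> gen_group U" and tau0: "\<tau> zero = infty" and tauinf: "\<tau> infty = zero"
  using mu_props[OF e_unit] tau_def by auto

lemma tau_sym: "\<tau> \<in> sym_eq eq" using gen_sym[OF tau_gen] .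
lemma tau_bij: "bij \<tau>" using sym_eq_bij[OF tau_sym] .
lemma phi_gen: "inv \<tau> \<in> gen_group U" using gen_inv[OF tau_gen] .
lemma phi_sym: "inv \<tau> \<in> sym_eq eq" using gen_sym[OF phi_gen] .
lemma phi_tau: "inv \<tau> (\<tau> y) = y" using tau_bij by (simp add: bij_is_inj inv_f_f)
lemma tau_phi: "\<tau> (inv \<tau> y) = y" using tau_bij by (simp add: bij_is_surj surj_f_inv_f)
lemma phi0: "inv \<tau> zero = infty" using phi_tau[of infty] tauinf by simp
lemma phiinf: "inv \<tau> infty = zero" using phi_tau[of zero] tau0 by simp

lemma tau_unit: assumes "unit y" shows "unit (\<tau> y)"
proof -
  have "eq (\<tau> y) zero \<longleftrightarrow> eq y infty" using sym_eq_eq[OF tau_sym, of y infty] tauinf by simp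
  moreover have "eq (\<tau> y) infty \<longleftrightarrow> eq y zero" using sym_eq_eq[OF tau_sym, of y zero] tau0 by simp
  ultimately show ?thesis using assms by (simp add: is_unit_def)
qed

lemma phi_unit: assumes "unit y" shows "unit (inv \<tau> y)"
proof -
  have "eq (inv \<tau> y) zero \<longleftrightarrow> eq y infty" using sym_eq_eq[OF phi_sym, of y infty] phiinf by simp
  moreover have "eq (inv \<tau> y) infty \<longleftrightarrow> eq y zero" using sym_eq_eq[OF phi_sym, of y zero] phi0 by simp
  ultimately show ?thesis using assms by (simp add: is_unit_def)
qed

lemma S1: assumes "unit x" shows "inv \<tau> (ng x) = ng (inv \<tau> x)"
  using spec assms phi_tau by metis

lemma S2: assumes "unit x" shows "\<tau> (ng x) = ng (\<tau> x)"
  using spec tau_unit[OF assms] phi_tau by metis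

lemma comm: "g \<in> U infty \<Longrightarrow> h \<in> U infty \<Longrightarrow> g \<circ> h = h \<circ> g" using ab by blast

lemma unit_ne: "unit a \<Longrightarrow> \<not> eq a infty" by (simp add: is_unit_def)

lemma mul_ng: assumes a: "\<not> eq a infty" shows "mul (ng a) k = ng (mul a k)"
proof -
  let ?h = "al a ^^ k" and ?g = "al (ng a) ^^ k"
  have i: "inv (al a) \<in> U infty" using U_inv al a by blast
  have c: "inv (al a) \<circ> al a = al a \<circ> inv (al a)" using comm[OF i al(1)[OF a]] .
  have ia: "inv (al a) \<circ> al a = id" by (rule inj_iff[THEN iffD1, OF bij_is_inj[OF U_bij[OF al(1)[OF a]]]])
  have ai: "al a \<circ> inv (al a) = id" by (rule surj_iff[THEN iffD1, OF bij_is_surj[OF U_bij[OF al(1)[OF a]]]])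
  have gh: "?g \<circ> ?h = id" using pow_comm[OF c, of k] ia al_inv[OF a] by simp
  have hg: "?h \<circ> ?g = id" using pow_comm[OF c[symmetric], of k] ai al_inv[OF a] by simp
  have "inv ?h = ?g" by (rule inv_unique_comp[OF hg gh])
  then have "inv (al (mul a k)) = ?g" using al_pow[OF a] by simp
  then show ?thesis unfolding lneg_def[of U zero infty "mul a k"] lmult_def[of U zero infty "ng a" k] by simp
qed

lemma conj_mul: assumes g: "\<psi> \<in> gen_group U" and z: "\<psi> zero = zero" and i: "\<psi> infty = infty"
  and a: "\<not> eq a infty" shows "\<psi> (mul a k) = mul (\<psi> a) k"
proof -
  have b: "bij \<psi>" using sym_eq_bij[OF gen_sym[OF g]] .
  let ?c = "\<psi> \<circ> al a \<circ> inv \<psi>"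
  have cU: "?c \<in> U infty" using LM2[OF g al(1)[OF a]] i by simp
  have iz: "inv \<psi> zero = zero" using b z by (metis bij_is_inj inv_f_f)
  have "?c zero = \<psi> a" using iz al(2)[OF a] by simp
  then have ca: "?c = al (\<psi> a)" using al_of[OF cU] by simp
  have "mul (\<psi> a) k = (?c ^^ k) zero" using ca by (simp add: lmult_def)
  also have "\<dots> = \<psi> ((al a ^^ k) zero)" using conj_pow[OF b] iz by simp
  also have "\<dots> = \<psi> (mul a k)" by (simp add: lmult_def)
  finally show ?thesis by simp
qed

end

context slm2 begin

lemma W: assumes zu: "unit z"
  shows "al z (\<tau> (al (inv \<tau> (ng z)) (inv \<tau> (mul (ng z) m)))) = \<tau> (mul (inv \<tau> z) (Suc m))"
proof -
  have zn: "\<not> eq z infty" using zu unit_ne by blast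
  have nzu: "unit (ng z)" using ng_unit[OF zu] .
  define c where "c = inv \<tau> (ng z)"
  have cu: "unit c" unfolding c_def using phi_unit[OF nzu] .
  have cn: "\<not> eq c infty" using cu unit_ne by blast
  have key: "inv \<tau> z = ng c" unfolding c_def using S1[OF nzu] ng_ng[OF zn] by simp
  define \<psi> where "\<psi> = inv \<tau> \<circ> al z \<circ> \<tau> \<circ> al c \<circ> inv \<tau> \<circ> al z"
  have azU: "al z \<in> gen_group U" by (rule gen_base[where U=U, OF al(1)[OF zn]])
  have acU: "al c \<in> gen_group U" by (rule gen_base[where U=U, OF al(1)[OF cn]])
  have pg: "\<psi> \<in> gen_group U" unfolding \<psi>_def
    by (intro gen_mult azU acU phi_gen tau_gen)
  have az0: "al z zero = z" using al(2)[OF zn] .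
  have ac0: "al c zero = c" using al(2)[OF cn] .
  have azi: "al z infty = infty" using U_fix[OF al(1)[OF zn]] .
  have aci: "al c infty = infty" using U_fix[OF al(1)[OF cn]] .
  have p0: "\<psi> zero = zero" unfolding \<psi>_def
    using az0 key al_ng[OF cn] tau0 azi phiinf by simp
  have tc: "\<tau> c = ng z" unfolding c_def by (rule tau_phi)
  have pinf: "\<psi> infty = infty" unfolding \<psi>_def
    using azi phiinf ac0 tc al_ng[OF zn] phi0 by simp
  have pnz: "\<psi> (ng z) = inv \<tau> z" unfolding \<psi>_def
    using al_ng[OF zn] phi0 aci tauinf az0 by simp
  have "\<psi> (mul (ng z) (Suc m)) = mul (inv \<tau> z) (Suc m)"
    using conj_mul[OF pg p0 pinf ng_ne[OF zn]] pnz by simp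
  moreover have "al z (mul (ng z) (Suc m)) = mul (ng z) m"
  proof -
    have "mul (ng z) (Suc m) = inv (al z) (mul (ng z) m)" using mul_Suc al_inv[OF zn] by simp
    then show ?thesis using U_bij[OF al(1)[OF zn]] by (simp add: bij_is_surj surj_f_inv_f)
  qed
  ultimately have "inv \<tau> (al z (\<tau> (al c (inv \<tau> (mul (ng z) m))))) = mul (inv \<tau> z) (Suc m)"
    unfolding \<psi>_def by simp
  then show ?thesis unfolding c_def by (metis tau_phi)
qed

lemma hypU: "unit x \<Longrightarrow> 1 \<le> k \<Longrightarrow> k \<le> n \<Longrightarrow> unit (mul x k)" using hyp by blast

lemma Q: assumes "1 \<le> k" "k \<le> n" shows "\<forall>u. unit u \<longrightarrow> mul (\<tau> (mul u k)) k = \<tau> u"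
  using assms
proof (induction k)
  case 0 then show ?case by simp
next
  case (Suc m)
  show ?case
  proof (cases "m = 0")
    case True
    then show ?thesis using mul_1 unit_ne tau_unit by simp
  next
    case False
    then have m1: "1 \<le> m" and mn: "m \<le> n" and smn: "Suc m \<le> n" using Suc.prems by auto
    have IH: "\<And>u. unit u \<Longrightarrow> mul (\<tau> (mul u m)) m = \<tau> u" using Suc.IH[OF m1 mn] by blast
    show ?thesis
    proof (intro allI impI)
      fix u assume uu: "unit u"
      have umu: "unit (mul u m)" using hypU[OF uu m1 mn] .
      have usu: "unit (mul u (Suc m))" using hypU[OF uu _ smn] by simp
      define X where "X = mul (mul u m) (Suc m)"
      have Xu: "unit X" unfolding X_def using hypU[OF umu _ smn] by simp
      define A where "A = \<tau> (mul u m)"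
      define B where "B = \<tau> (mul u (Suc m))"
      define C where "C = \<tau> X"
      have Au: "unit A" unfolding A_def using tau_unit[OF umu] .
      have Bu: "unit B" unfolding B_def using tau_unit[OF usu] .
      have Cu: "unit C" unfolding C_def using tau_unit[OF Xu] .
      have An: "\<not> eq A infty" and Bn: "\<not> eq B infty" and Cn: "\<not> eq C infty"
        using Au Bu Cu unit_ne by auto
      have un: "\<not> eq u infty" using uu unit_ne by blast
      have W1: "al (ng A) (\<tau> (al (inv \<tau> (ng (ng A))) (inv \<tau> (mul (ng (ng A)) m))))
              = \<tau> (mul (inv \<tau> (ng A)) (Suc m))" using W[OF ng_unit[OF Au]] .
      have "inv \<tau> (ng (ng A)) = mul u m" using ng_ng[OF An] unfolding A_def by (simp add: phi_tau)
      moreover have "mul (ng (ng A)) m = \<tau> u" using ng_ng[OF An] IH[OF uu] unfolding A_def by simp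
      ultimately have L: "\<tau> (al (inv \<tau> (ng (ng A))) (inv \<tau> (mul (ng (ng A)) m))) = B"
        unfolding B_def using al_mul_apply[OF un] phi_tau by simp
      have "inv \<tau> (ng A) = ng (mul u m)" using S1[OF Au] unfolding A_def by (simp add: phi_tau)
      then have "\<tau> (mul (inv \<tau> (ng A)) (Suc m)) = ng C"
        unfolding C_def X_def using mul_ng[OF unit_ne[OF umu]] S2 Xu X_def by simp
      then have J: "al (ng A) B = ng C" using W1 L by simp
      have CB: "mul C m = B"
      proof -
        have "mul (mul u (Suc m)) m = X" unfolding X_def
          using mul_mul[OF un] by (simp add: mult.commute)
        then show ?thesis using IH[OF usu] unfolding C_def B_def by simp
      qed
      have AT: "mul A m = \<tau> u" unfolding A_def using IH[OF uu] .
      define a where "a = al A"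
      define b where "b = al B"
      define c where "c = al C"
      have aU: "a \<in> U infty" and bU: "b \<in> U infty" and cU: "c \<in> U infty"
        unfolding a_def b_def c_def using al(1) An Bn Cn by auto
      have "al (ng A) \<circ> b \<in> U infty" using U_comp[OF bU al(1)[OF ng_ne[OF An]]] .
      then have "al (ng A) \<circ> b = al (ng C)" using al_of J al(2)[OF Bn] unfolding b_def by force
      then have ib: "inv a \<circ> b = inv c" unfolding a_def c_def using al_inv An Cn by simp
      have bc: "b \<circ> c = a"
      proof
        fix x
        have "b (c x) = a (inv a (b (c x)))" using U_bij[OF aU] by (simp add: bij_is_surj surj_f_inv_f)
        also have "\<dots> = a (inv c (c x))" using fun_cong[OF ib, of "c x"] by simp
        also have "\<dots> = a x" using U_bij[OF cU] by (simp add: bij_is_inj inv_f_f)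
        finally show "(b \<circ> c) x = a x" by simp
      qed
      have "al (\<tau> u) = a ^^ m" unfolding a_def using al_pow[OF An] AT by simp
      also have "\<dots> = b ^^ m \<circ> c ^^ m" using pow_comm[OF comm[OF bU cU]] bc by simp
      also have "c ^^ m = b" unfolding c_def b_def using al_pow[OF Cn] CB by simp
      also have "b ^^ m \<circ> b = b ^^ Suc m" by (simp only: funpow_Suc_right)
      also have "\<dots> = al (mul B (Suc m))" unfolding b_def using al_pow[OF Bn] .
      finally have "al (\<tau> u) = al (mul B (Suc m))" .
      then have "al (\<tau> u) zero = al (mul B (Suc m)) zero" by simp
      then show "mul (\<tau> (mul u (Suc m))) (Suc m) = \<tau> u"
        using al(2)[OF unit_ne[OF tau_unit[OF uu]]] al(2)[OF mul_ne[OF Bn]] unfolding B_def by simp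
    qed
  qed
qed

end

context slm2 begin

lemma divis: assumes k1: "1 \<le> k" and kn: "k \<le> n" and uU: "u \<in> U infty"
  shows "\<exists>!v. v \<in> U infty \<and> v ^^ k = u"
proof -
  have Qk: "\<And>y. unit y \<Longrightarrow> mul (\<tau> (mul y k)) k = \<tau> y" using Q[OF k1 kn] by blast
  have inju: "y = y'" if "unit y" "unit y'" "mul y k = mul y' k" for y y'
  proof -
    have "\<tau> y = \<tau> y'" using Qk[OF that(1)] Qk[OF that(2)] that(3) by simp
    then show ?thesis using phi_tau by metis
  qed
  have su: "\<exists>v\<in>U infty. v ^^ k = al a" if au: "unit a" for a
  proof -
    define y where "y = inv \<tau> a"
    have yu: "unit y" unfolding y_def using phi_unit[OF au] .
    define b where "b = \<tau> (mul y k)"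
    have bu: "unit b" unfolding b_def using tau_unit[OF hypU[OF yu k1 kn]] .
    have "al b ^^ k = al (mul b k)" using al_pow unit_ne[OF bu] by blast
    also have "mul b k = a" unfolding b_def using Qk[OF yu] unfolding y_def by (simp add: tau_phi)
    finally show ?thesis using al(1)[OF unit_ne[OF bu]] by blast
  qed
  have en: "\<not> eq e infty" using e_unit unit_ne by blast
  have ex: "\<exists>v\<in>U infty. v ^^ k = u"
  proof (cases "eq (u zero) zero")
    case False
    then have "unit (u zero)" using Uinf_ne[OF uU zi] by (simp add: is_unit_def)
    then show ?thesis using su al_of[OF uU] by metis
  next
    case True
    define w where "w = u \<circ> inv (al e)"
    have wU: "w \<in> U infty" unfolding w_def using U_comp[OF U_inv[OF al(1)[OF en]] uU] .
    have w0: "w zero = u (ng e)" unfolding w_def lneg_def by simp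
    have neu: "unit (ng e)" using ng_unit[OF e_unit] .
    have "\<not> eq (u (ng e)) zero"
    proof
      assume "eq (u (ng e)) zero"
      then have "eq (u (ng e)) (u zero)" using True eq_sym eq_trans by blast
      then have "eq (ng e) zero" using U_eq[OF uU] by simp
      then show False using neu by (simp add: is_unit_def)
    qed
    then have wu: "unit (w zero)" using w0 Uinf_ne[OF uU unit_ne[OF neu]] by (simp add: is_unit_def)
    obtain v1 where v1: "v1 \<in> U infty" "v1 ^^ k = w" using su[OF wu] al_of[OF wU] by metis
    obtain v2 where v2: "v2 \<in> U infty" "v2 ^^ k = al e" using su[OF e_unit] by blast
    have "u = w \<circ> al e"
    proof
      fix x show "u x = (w \<circ> al e) x" unfolding w_def
        using U_bij[OF al(1)[OF en]] by (simp add: bij_is_inj inv_f_f)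
    qed
    also have "\<dots> = (v1 \<circ> v2) ^^ k" using pow_comm[OF comm[OF v1(1) v2(1)]] v1 v2 by simp
    finally show ?thesis using U_comp[OF v2(1) v1(1)] by metis
  qed
  have uniq: "v = w" if v: "v \<in> U infty" "v ^^ k = u" and w: "w \<in> U infty" "w ^^ k = u" for v w
  proof -
    define d where "d = v \<circ> inv w"
    have dU: "d \<in> U infty" unfolding d_def using U_comp[OF U_inv[OF w(1)] v(1)] .
    have wb: "bij w" using U_bij[OF w(1)] .
    have dw: "d \<circ> w = v" unfolding d_def using wb by (auto simp: bij_is_inj inv_f_f)
    have "d ^^ k \<circ> w ^^ k = w ^^ k" using pow_comm[OF comm[OF dU w(1)], of k] dw v w by simp
    moreover have wkb: "bij (w ^^ k)" using U_bij[OF pow_U[OF w(1)]] .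
    ultimately have dk: "d ^^ k = id"
    proof -
      assume h: "d ^^ k \<circ> w ^^ k = w ^^ k"
      show ?thesis
      proof
        fix y
        have "(d ^^ k) ((w ^^ k) (inv (w ^^ k) y)) = (w ^^ k) (inv (w ^^ k) y)"
          using fun_cong[OF h] by simp
        then show "(d ^^ k) y = id y" using wkb by (simp add: bij_is_surj surj_f_inv_f)
      qed
    qed
    have did: "d = id"
    proof (cases "eq (d zero) zero")
      case False
      then have du: "unit (d zero)" using Uinf_ne[OF dU zi] by (simp add: is_unit_def)
      have "mul (d zero) k = (d ^^ k) zero" using al_of[OF dU] by (simp add: lmult_def)
      then have "mul (d zero) k = zero" using dk by simp
      then show ?thesis using hypU[OF du k1 kn] eq_refl by (simp add: is_unit_def)
    next
      case True
      define e' where "e' = d e"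
      have e'n: "\<not> eq e' infty" unfolding e'_def using Uinf_ne[OF dU en] .
      have "\<not> eq e' zero"
      proof
        assume "eq e' zero"
        then have "eq (d e) (d zero)" unfolding e'_def using True eq_sym eq_trans by blast
        then have "eq e zero" using U_eq[OF dU] by simp
        then show False using e_unit by (simp add: is_unit_def)
      qed
      then have e'u: "unit e'" using e'n by (simp add: is_unit_def)
      have "d \<circ> al e \<in> U infty" using U_comp[OF al(1)[OF en] dU] .
      then have ae': "al e' = d \<circ> al e" unfolding e'_def using al_of al(2)[OF en] by force
      have "mul e' k = ((d \<circ> al e) ^^ k) zero" using ae' by (simp add: lmult_def)
      also have "\<dots> = (d ^^ k \<circ> al e ^^ k) zero" using pow_comm[OF comm[OF dU al(1)[OF en]]] by simp
      also have "\<dots> = mul e k" using dk by (simp add: lmult_def)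
      finally have "e' = e" using inju[OF e'u e_unit] by blast
      then have "d e = id e" unfolding e'_def by simp
      then show ?thesis using U_uniq[OF _ dU U_id, of e] en eq_sym by blast
    qed
    show ?thesis using dw did by simp
  qed
  show ?thesis using ex uniq by blast
qed

end

theorem mainTheorem15:
  fixes eq :: "'a \<Rightarrow> 'a \<Rightarrow> bool" and U :: "'a \<Rightarrow> ('a \<Rightarrow> 'a) set"
    and zero infty :: 'a and n :: nat
  assumes "local_moufang_set eq U"
    and "\<not> eq zero infty"
    and "special eq U zero infty"
    and "\<forall>g\<in>U infty. \<forall>h\<in>U infty. g \<circ> h = h \<circ> g"
    and "n \<ge> 1"
    and "\<forall>x. is_unit eq zero infty x \<longrightarrow>
           (\<forall>k. 1 \<le> k \<and> k \<le> n \<longrightarrow> is_unit eq zero infty (lmult U zero infty x k))"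
  shows "\<forall>k. 1 \<le> k \<and> k \<le> n \<longrightarrow>
           (\<forall>u\<in>U infty. \<exists>!v. v \<in> U infty \<and> v ^^ k = u)"
proof -
  from assms(3) obtain e where eu: "is_unit eq zero infty e"
    and sp: "\<forall>x. is_unit eq zero infty x \<longrightarrow>
      mu U zero infty e (lneg U zero infty (inv (mu U zero infty e) x)) = lneg U zero infty x"
    unfolding special_def Let_def by blast
  interpret slm2 eq U zero infty "mu U zero infty e" e n
    by unfold_locales (use assms eu sp in auto)
  show ?thesis using divis by blast
qed

end
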